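(* For $k\geq 1$ define the formal power series $$\psi_k(t)=\mu(k)\,(z_2;q)_k\sum_{j=k}^{\infty}\frac{(q^{j-k+1};q)_k}{(q^jz_2;q)_k}\,t^j,\qquad \mu(k)=(-1)^k\frac{q^{\binom{k}{2}}}{(q;q)_k}\,\frac{1-q^{2k-1}z_2}{1-q^{k-1}z_2},$$ and let $f_k(t)=\sum_{j\geq k}\rho(k,j)t^j$ for $k\geq 0$, where $\rho(k,j)=m_j/v'_{j+1}(x_k)$. Then for every $k\geq 1$, $f_k(t)$ is the Hadamard (coefficientwise) product of $f_0(t)$ and $\psi_k(t)$, i.e. $\rho(k,j)$ equals $\rho(0,j)$ times the coefficient of $t^j$ in $\psi_k(t)$, for all $j\geq k$.
   Context: Fix $q\in\mathbb{C}$ with $q\neq 0$ and $|q|\neq 1$. Fix complex parameters $a_1,a_2,b_0,b_1,b_2,s_1,s_2$ with $a_2\neq0$, $b_2\neq0$, put $s_0=-s_1-s_2$, and for $k\geq 0$ define $x_k=b_0+b_1q^k+b_2q^{-k}$, $h_k=a_1q^k+a_2q^{-k}$, $d_k=s_0+s_1q^k+s_2q^{-k}$; assume the $h_k$ are pairwise distinct and the $x_k$ are pairwise distinct. Let $g_0=0$ and $g_k=x_{k-1}(h_k-h_0)+d_k$ for $k\geq 1$. Let $v_n(t)=\prod_{i=0}^{n-1}(t-x_i)$, so $v_{j+1}'(x_k)=\prod_{i=0,\,i\neq k}^{j}(x_k-x_i)$. Define $m_0=1$, $m_j=\prod_{i=1}^{j}\frac{g_i}{h_0-h_i}$. Put $z_2=qb_1/b_2$.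 $(t;q)_k=\prod_{i=0}^{k-1}(1-q^it)$. *)

theory Defs
  imports Complex_Main "HOL-Computational_Algebra.Formal_Power_Series"
begin

definition qpoch :: "complex \<Rightarrow> complex \<Rightarrow> nat \<Rightarrow> complex" where
  "qpoch t q k = (\<Prod>i<k. 1 - q ^ i * t)"

definition xx :: "complex \<Rightarrow> complex \<Rightarrow> complex \<Rightarrow> complex \<Rightarrow> nat \<Rightarrow> complex" where
  "xx q b0 b1 b2 k = b0 + b1 * q ^ k + b2 * inverse (q ^ k)"

definition hh :: "complex \<Rightarrow> complex \<Rightarrow> complex \<Rightarrow> nat \<Rightarrow> complex" where
  "hh q a1 a2 k = a1 * q ^ k + a2 * inverse (q ^ k)"

definition dd :: "complex \<Rightarrow> complex \<Rightarrow> complex \<Rightarrow> nat \<Rightarrow> complex" where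
  "dd q s1 s2 k = (- s1 - s2) + s1 * q ^ k + s2 * inverse (q ^ k)"

definition gg :: "complex \<Rightarrow> complex \<Rightarrow> complex \<Rightarrow> complex \<Rightarrow> complex \<Rightarrow> complex
    \<Rightarrow> complex \<Rightarrow> complex \<Rightarrow> nat \<Rightarrow> complex" where
  "gg q a1 a2 b0 b1 b2 s1 s2 k =
     (if k = 0 then 0
      else xx q b0 b1 b2 (k - 1) * (hh q a1 a2 k - hh q a1 a2 0) + dd q s1 s2 k)"

definition mm :: "complex \<Rightarrow> complex \<Rightarrow> complex \<Rightarrow> complex \<Rightarrow> complex \<Rightarrow> complex
    \<Rightarrow> complex \<Rightarrow> complex \<Rightarrow> nat \<Rightarrow> complex" where
  "mm q a1 a2 b0 b1 b2 s1 s2 j =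
     (\<Prod>i\<in>{1..j}. gg q a1 a2 b0 b1 b2 s1 s2 i / (hh q a1 a2 0 - hh q a1 a2 i))"

text \<open>v'_{j+1}(x_k) = prod_{i=0, i~=k}^j (x_k - x_i)\<close>
definition vder :: "complex \<Rightarrow> complex \<Rightarrow> complex \<Rightarrow> complex \<Rightarrow> nat \<Rightarrow> nat \<Rightarrow> complex" where
  "vder q b0 b1 b2 j k = (\<Prod>i\<in>{0..j} - {k}. xx q b0 b1 b2 k - xx q b0 b1 b2 i)"

definition rho :: "complex \<Rightarrow> complex \<Rightarrow> complex \<Rightarrow> complex \<Rightarrow> complex \<Rightarrow> complex
    \<Rightarrow> complex \<Rightarrow> complex \<Rightarrow> nat \<Rightarrow> nat \<Rightarrow> complex" where
  "rho q a1 a2 b0 b1 b2 s1 s2 k j =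
     mm q a1 a2 b0 b1 b2 s1 s2 j / vder q b0 b1 b2 j k"

definition ff :: "complex \<Rightarrow> complex \<Rightarrow> complex \<Rightarrow> complex \<Rightarrow> complex \<Rightarrow> complex
    \<Rightarrow> complex \<Rightarrow> complex \<Rightarrow> nat \<Rightarrow> complex fps" where
  "ff q a1 a2 b0 b1 b2 s1 s2 k =
     Abs_fps (\<lambda>j. if k \<le> j then rho q a1 a2 b0 b1 b2 s1 s2 k j else 0)"

definition mu :: "complex \<Rightarrow> complex \<Rightarrow> nat \<Rightarrow> complex" where
  "mu q z2 k = (-1) ^ k * q ^ (k choose 2) / qpoch q q k *
               ((1 - q ^ (2 * k - 1) * z2) / (1 - q ^ (k - 1) * z2))"

definition psi :: "complex \<Rightarrow> complex \<Rightarrow> nat \<Rightarrow> complex fps" where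
  "psi q z2 k = Abs_fps (\<lambda>j. if k \<le> j then
       mu q z2 k * qpoch z2 q k * (qpoch (q ^ (j - k + 1)) q k / qpoch (q ^ j * z2) q k)
     else 0)"

definition hadamard :: "'a::times fps \<Rightarrow> 'a fps \<Rightarrow> 'a fps" where
  "hadamard f g = Abs_fps (\<lambda>j. fps_nth f j * fps_nth g j)"

end

theory Submission
  imports Defs
begin

lemma qpoch_shift: "qpoch t q k * (1 - q^k*t) = (1-t) * qpoch (q*t) q k"
proof (induction k)
  case 0 then show ?case by (simp add: qpoch_def)
next
  case (Suc k)
  have "qpoch t q (Suc k) * (1 - q^Suc k*t) = (qpoch t q k * (1 - q^k*t)) * (1 - q^Suc k*t)"
    by (simp add: qpoch_def)
  also have "\<dots> = ((1-t) * qpoch (q*t) q k) * (1 - q^Suc k*t)"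
    using Suc by simp
  also have "\<dots> = (1-t) * (qpoch (q*t) q k * (1 - q^k*(q*t)))"
    by (simp add: algebra_simps)
  also have "\<dots> = (1-t) * qpoch (q*t) q (Suc k)" by (simp add: qpoch_def)
  finally show ?case .
qed

lemma prod_pow_choose: "(\<Prod>i<k. (q::complex)^i) = q ^ (k choose 2)"
proof (induction k)
  case 0 then show ?case by (simp add: binomial_eq_0)
next
  case (Suc k)
  have "Suc k choose 2 = (k choose 2) + k"
    using binomial_Suc_Suc[of k 1] by (simp add: numeral_2_eq_2)
  then show ?case using Suc by (simp add: power_add)
qed

lemma sq_choose: "K * K = K + 2 * (K choose 2)"
proof (induction K)
  case 0 then show ?case by (simp add: binomial_eq_0)
next
  case (Suc k)
  have "Suc k choose 2 = (k choose 2) + k"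
    using binomial_Suc_Suc[of k 1] by (simp add: numeral_2_eq_2)
  then show ?case using Suc by simp
qed

lemma alg_base:
  fixes s A Q T U Z V W B P QKK :: complex
  assumes "Q\<noteq>0" "B\<noteq>0" "Z\<noteq>0" "W\<noteq>0" "V\<noteq>0" "1-U\<noteq>0" "P\<noteq>0" "A\<noteq>0" "s*s=1"
    "W*(1-T) = (1-U)*V" "QKK = P*A*A"
  shows "s*A/Q*((1-T)/(1-U)) * Z * (Q/V) = (Q*B*Z/(P*A)) / (s*Q*B*W/QKK)"
proof -
  have s0: "s \<noteq> 0" using assms(9) by auto
  have "s*A/Q*((1-T)/(1-U)) * Z * (Q/V) = s*A*Z*(W*(1-T))/((1-U)*V*W)"
    using assms by (simp add: field_simps)
  also have "\<dots> = s*A*Z*((1-U)*V)/((1-U)*V*W)" using assms(10) by simp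
  also have "\<dots> = s*A*Z/W" using assms by (simp add: field_simps)
  also have "\<dots> = (Q*B*Z/(P*A)) / (s*Q*B*W/QKK)"
    using assms s0 by (simp add: field_simps)
  finally show ?thesis .
qed

lemma alg_step:
  fixes M a a' b b' P R S z B :: complex
  assumes "a*(1-P*R) = (1-R)*a'" "b*(1-P*(S*z)) = (1-S*z)*b'" "b\<noteq>0" "b'\<noteq>0" "P\<noteq>0" "R\<noteq>0"
  shows "M*(a'/b') * (-((-P)*(1-R)*(-B)*(1 - P*(z*S))/(P*R*P))) = M*(a/b) * ((1 - P*R)*(-B)*(1 - z*S)/(P*R))"
proof -
  have "M*(a'/b') * (-((-P)*(1-R)*(-B)*(1 - P*(z*S))/(P*R*P))) = -(M*B*((1-R)*a')*(b*(1-P*(S*z)))/(b*b'*P*R))"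
    using assms by (simp add: field_simps)
  also have "\<dots> = -(M*B*(a*(1-P*R))*((1-S*z)*b')/(b*b'*P*R))" using assms by simp
  also have "\<dots> = M*(a/b) * ((1 - P*R)*(-B)*(1 - z*S)/(P*R))"
    using assms by (simp add: field_simps)
  finally show ?thesis .
qed

definition Cf :: "complex \<Rightarrow> complex \<Rightarrow> nat \<Rightarrow> nat \<Rightarrow> complex" where
  "Cf q z K j = mu q z K * qpoch z q K * (qpoch (q ^ (j - K + 1)) q K / qpoch (q ^ j * z) q K)"

context
  fixes q b0 b1 b2 :: complex
  assumes q0: "q \<noteq> 0" and q1: "norm q \<noteq> 1" and b2: "b2 \<noteq> 0"
    and injx: "inj (xx q b0 b1 b2)"
begin

abbreviation "X \<equiv> xx q b0 b1 b2"

lemma xdiff: "X a - X b = (q^a - q^b) * (b1 * q^(a+b) - b2) / q^(a+b)"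
  unfolding xx_def using q0 by (simp add: field_simps power_add)

lemma bfac: "b1 * q^(Suc m) - b2 = - b2 * (1 - (q*b1/b2) * q^m)"
  using q0 b2 by (simp add: field_simps)

lemma zq_ne: "(q*b1/b2) * q^m \<noteq> 1"
proof
  assume "(q*b1/b2)*q^m = 1"
  then have "b1*q^Suc m - b2 = 0" using bfac by simp
  then have "X (Suc m) - X 0 = 0" using xdiff[of "Suc m" 0] by simp
  then have "X (Suc m) = X 0" by simp
  with injx show False by (auto dest: injD)
qed

lemma qpow_ne: "n > 0 \<Longrightarrow> q^n \<noteq> 1"
  using power_eq_1_iff[of q n] q1 by auto

lemma vder_Suc: "k \<le> j \<Longrightarrow> vder q b0 b1 b2 (Suc j) k = vder q b0 b1 b2 j k * (X k - X (Suc j))"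
proof -
  assume "k \<le> j"
  then have "{0..Suc j} - {k} = insert (Suc j) ({0..j}-{k})" by auto
  then show ?thesis unfolding vder_def by (simp add: mult.commute)
qed

lemma vder_ne: "vder q b0 b1 b2 j k \<noteq> 0"
  unfolding vder_def using injx by (auto dest: injD)

lemma xdiff2: "X (b + Suc d) - X b = (-(q^b)) * (1 - q^(Suc d)) * (-b2) * (1 - q^b * ((q*b1/b2)*q^(b + d))) / (q^(b + Suc d) * q^b)"
  unfolding xx_def using q0 b2 by (simp add: field_simps power_add)

lemma vder_0: "vder q b0 b1 b2 k 0 = qpoch q q k * (-b2)^k * qpoch (q*b1/b2) q k / (\<Prod>m<k. q^Suc m)"
proof -
  have "{0..k} - {0} = {Suc 0..k}" by auto
  then have "vder q b0 b1 b2 k 0 = (\<Prod>m<k. X 0 - X (Suc m))"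
    unfolding vder_def by (simp add: prod.atLeast1_atMost_eq)
  also have "\<dots> = (\<Prod>m<k. (1 - q^m*q) * (-b2) * (1 - q^m * (q*b1/b2)) / q^Suc m)"
  proof (rule prod.cong[OF refl])
    fix m
    show "X 0 - X (Suc m) = (1 - q^m*q) * (-b2) * (1 - q^m * (q*b1/b2)) / q^Suc m"
      using xdiff[of 0 "Suc m"] bfac[of m] by (simp add: mult.commute)
  qed
  also have "\<dots> = (\<Prod>m<k. 1 - q^m*q) * (\<Prod>m<k. -b2) * (\<Prod>m<k. 1 - q^m * (q*b1/b2)) / (\<Prod>m<k. q^Suc m)"
    by (simp only: prod.distrib prod_dividef)
  also have "\<dots> = qpoch q q k * (-b2)^k * qpoch (q*b1/b2) q k / (\<Prod>m<k. q^Suc m)"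
    by (simp only: qpoch_def prod_constant card_lessThan)
  finally show ?thesis .
qed

lemma vder_kk: "vder q b0 b1 b2 (Suc k) (Suc k) =
   (-1)^Suc k * qpoch q q (Suc k) * (-b2)^Suc k * qpoch ((q*b1/b2)*q^k) q (Suc k) / q^(Suc k * Suc k)"
proof -
  let ?K = "Suc k"
  have "{0..?K} - {?K} = {..<?K}" by auto
  then have "vder q b0 b1 b2 ?K ?K = (\<Prod>i<?K. X ?K - X i)"
    unfolding vder_def by simp
  also have "\<dots> = (\<Prod>i<?K. (-(q^i)) * (1 - q^(?K - i)) * (-b2) * (1 - q^i * ((q*b1/b2)*q^k)) / (q^(?K) * q^i))"
  proof (rule prod.cong[OF refl])
    fix i assume "i \<in> {..<?K}"
    then have i: "i \<le> k" by simp
    have "X (i + Suc (k - i)) - X i = (-(q^i)) * (1 - q^(Suc (k - i))) * (-b2) * (1 - q^i * ((q*b1/b2)*q^(i + (k-i)))) / (q^(i + Suc (k-i)) * q^i)"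
      by (rule xdiff2)
    moreover have "i + Suc (k - i) = ?K" "i + (k-i) = k" "?K - i = Suc (k - i)" using i by auto
    ultimately show "X ?K - X i = (-(q^i)) * (1 - q^(?K - i)) * (-b2) * (1 - q^i * ((q*b1/b2)*q^k)) / (q^(?K) * q^i)"
      by simp
  qed
  also have "\<dots> = (\<Prod>i<?K. (-(q^i))) * (\<Prod>i<?K. 1 - q^(?K - i)) * (\<Prod>i<?K. -b2) * (\<Prod>i<?K. 1 - q^i * ((q*b1/b2)*q^k)) / ((\<Prod>i<?K. q^?K) * (\<Prod>i<?K. q^i))"
    by (simp only: prod.distrib prod_dividef)
  also have "\<dots> = (\<Prod>i<?K. (-(q^i))) * (\<Prod>i<?K. 1 - q^(?K - i)) * (-b2)^?K * qpoch ((q*b1/b2)*q^k) q ?K / ((\<Prod>i<?K. q^?K) * (\<Prod>i<?K. q^i))"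
    by (simp only: qpoch_def prod_constant card_lessThan)
  also have "(\<Prod>i<?K. 1 - q^(?K - i)) = qpoch q q ?K"
  proof -
    have "(\<Prod>i<?K. 1 - q^(?K - i)) = (\<Prod>i<?K. (\<lambda>m. 1 - q^m*q) (?K - Suc i))"
    proof (rule prod.cong[OF refl])
      fix i assume "i \<in> {..<?K}"
      then have "?K - i = Suc (?K - Suc i)" by auto
      then show "1 - q^(?K - i) = (\<lambda>m. 1 - q^m*q) (?K - Suc i)" by (simp add: mult.commute)
    qed
    also have "\<dots> = qpoch q q ?K" unfolding qpoch_def by (rule prod.nat_diff_reindex)
    finally show ?thesis .
  qed
  also have "(\<Prod>i<?K. (-(q^i))) = (-1)^?K * (\<Prod>i<?K. q^i)"
  proof -
    have "(\<Prod>i<?K. (-(q^i))) = (\<Prod>i<?K. (-1) * q^i)" by simp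
    also have "\<dots> = (-1)^?K * (\<Prod>i<?K. q^i)" by (simp only: prod.distrib prod_constant card_lessThan)
    finally show ?thesis .
  qed
  also have "(\<Prod>i<?K. q^?K) = q^(?K * ?K)" by (simp only: prod_constant card_lessThan power_mult)
  finally show ?thesis using q0 by (simp add: field_simps)
qed

lemma qz_ne: "qpoch (q^a * (q*b1/b2)) q n \<noteq> 0"
proof -
  have "1 - q^i * (q^a * (q*b1/b2)) \<noteq> 0" for i
    using zq_ne[of "i+a"] by (simp add: power_add algebra_simps)
  then show ?thesis unfolding qpoch_def prod_zero_iff[OF finite_lessThan] by blast
qed

lemma qq_ne: "qpoch (q^Suc a) q n \<noteq> 0"
proof -
  have "1 - q^i * q^Suc a \<noteq> 0" for i
    using qpow_ne[of "i+Suc a"] by (simp add: power_add ac_simps)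
  then show ?thesis unfolding qpoch_def prod_zero_iff[OF finite_lessThan] by blast
qed

lemma base: "Cf q (q*b1/b2) (Suc k) (Suc k) = vder q b0 b1 b2 (Suc k) 0 / vder q b0 b1 b2 (Suc k) (Suc k)"
proof -
  let ?K = "Suc k" and ?z = "q*b1/b2"
  have pq: "(\<Prod>m<?K. q^Suc m) = q^?K * q^(?K choose 2)"
  proof -
    have "(\<Prod>m<?K. q^Suc m) = (\<Prod>m<?K. q * q^m)" by simp
    also have "\<dots> = q^?K * q^(?K choose 2)"
      by (simp only: prod.distrib prod_constant card_lessThan prod_pow_choose)
    finally show ?thesis .
  qed
  have sh: "qpoch (?z*q^k) q ?K * (1 - q^(Suc (2*k)) * ?z) = (1 - q^k * ?z) * qpoch (q^?K * ?z) q ?K"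
  proof -
    have e1: "q^?K * (?z*q^k) = q^(Suc(2*k)) * ?z"
    proof -
      have "q^(Suc(2*k)) = q*(q^k*q^k)" by (simp add: power_add[symmetric] mult_2)
      then show ?thesis by (simp add: ac_simps) metis
    qed
    have e2: "q*(?z*q^k) = q^?K * ?z" by (simp add: ac_simps)
    show ?thesis using qpoch_shift[of "?z*q^k" q ?K] unfolding e1 e2 by simp
  qed
  have C: "Cf q ?z ?K ?K = (-1)^?K * q^(?K choose 2) / qpoch q q ?K * ((1 - q^(Suc (2*k)) * ?z)/(1 - q^k*?z))
      * qpoch ?z q ?K * (qpoch q q ?K / qpoch (q^?K * ?z) q ?K)"
    unfolding Cf_def mu_def by simp
  have W: "qpoch (?z*q^k) q ?K \<noteq> 0" using qz_ne[of k] by (simp add: mult.commute)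
  have Z: "qpoch ?z q ?K \<noteq> 0" using qz_ne[of 0] by simp
  have Q: "qpoch q q ?K \<noteq> 0" using qq_ne[of 0] by simp
  have U: "1 - q^k*?z \<noteq> 0" using zq_ne[of k] by (simp add: mult.commute)
  have k2: "q^(k*2) = q^k*q^k" by (simp add: power_mult power2_eq_square)
  show ?thesis unfolding C vder_0 vder_kk pq
    apply (rule alg_base)
    apply (rule Q)
    using b2 apply simp
    apply (rule Z)
    apply (rule W)
    apply (rule qz_ne)
    using U apply simp
    using q0 apply simp
    using q0 apply simp
    apply (simp add: power_mult_distrib[symmetric])
    apply (rule sh)
    apply (simp only: sq_choose[of ?K] power_add)
    by (simp add: mult_2 power_add)
qed

lemma step: "Cf q (q*b1/b2) K (K + Suc n) * (X K - X (K + Suc n)) = Cf q (q*b1/b2) K (K+n) * (X 0 - X (K + Suc n))"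
proof -
  let ?z = "q*b1/b2"
  let ?M = "mu q ?z K * qpoch ?z q K"
  have c1: "Cf q ?z K (K+n) = ?M * (qpoch (q^Suc n) q K / qpoch (q^(K+n)*?z) q K)"
    unfolding Cf_def by simp
  have h1: "K + Suc n - K + 1 = Suc (Suc n)" by simp
  have h2: "q^Suc(Suc n) = q*q^Suc n" by simp
  have h3: "q^(K+Suc n)*?z = q*(q^(K+n)*?z)" by (simp add: ac_simps)
  have c2: "Cf q ?z K (K+Suc n) = ?M * (qpoch (q*q^Suc n) q K / qpoch (q*(q^(K+n)*?z)) q K)"
    unfolding Cf_def h1 h2 h3 by simp
  have h4: "q^(K+Suc n)*q^K = q^K*q^Suc n*q^K" by (simp add: power_add)
  have d1: "X K - X (K+Suc n) = -((-(q^K))*(1-q^Suc n)*(-b2)*(1 - q^K*(?z*q^(K+n)))/(q^K*q^Suc n*q^K))"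
    using xdiff2[of K n] unfolding h4 by (metis minus_diff_eq)
  have d2: "X 0 - X (K+Suc n) = (1 - q^K*q^Suc n) * (-b2) * (1 - ?z*q^(K+n))/(q^K*q^Suc n)"
  proof -
    have "X (0 + Suc (K+n)) - X 0 = (-(q^0)) * (1 - q^(Suc (K+n))) * (-b2) * (1 - q^0 * (?z*q^(0 + (K+n)))) / (q^(0 + Suc (K+n)) * q^0)"
      by (rule xdiff2)
    moreover have "q^(Suc (K+n)) = q^K*q^Suc n" by (simp add: power_add)
    ultimately have "X (K + Suc n) - X 0 = - ((1 - q^K*q^Suc n) * (-b2) * (1 - ?z*q^(K+n)) / (q^K*q^Suc n))"
      using q0 b2 by (simp add: power_add field_simps)
    then show ?thesis by (metis minus_diff_eq minus_minus)
  qed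
  have bne: "qpoch (q^(K+n)*?z) q K \<noteq> 0" by (rule qz_ne)
  have bne': "qpoch (q*(q^(K+n)*?z)) q K \<noteq> 0" using qz_ne[of "Suc (K+n)" K] by (simp add: ac_simps)
  show ?thesis unfolding c1 c2 d1 d2
    apply (rule alg_step)
    apply (rule qpoch_shift)
    apply (rule qpoch_shift)
    apply (rule bne)
    apply (rule bne')
    using q0 by simp_all
qed

lemma ind: "Cf q (q*b1/b2) (Suc k) (Suc k + n) = vder q b0 b1 b2 (Suc k + n) 0 / vder q b0 b1 b2 (Suc k + n) (Suc k)"
proof (induction n)
  case 0 then show ?case using base by simp
next
  case (Suc n)
  let ?K = "Suc k" and ?j = "Suc k + n"
  have e: "?K + Suc n = Suc ?j" by simp
  have ne: "X ?K - X (?K + Suc n) \<noteq> 0" using injx by (auto dest: injD)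
  have "Cf q (q*b1/b2) ?K (?K + Suc n) = Cf q (q*b1/b2) ?K ?j * (X 0 - X (?K + Suc n)) / (X ?K - X (?K + Suc n))"
    using step[of ?K n] ne by (simp add: field_simps)
  also have "\<dots> = vder q b0 b1 b2 (Suc ?j) 0 / vder q b0 b1 b2 (Suc ?j) ?K"
    unfolding Suc vder_Suc[of 0 ?j, OF le0] vder_Suc[of ?K ?j, OF le_add1] e
    using ne vder_ne by (simp add: field_simps)
  finally show ?case by (simp only: e)
qed

end

theorem mainTheorem5:
  fixes q a1 a2 b0 b1 b2 s1 s2 :: complex and k :: nat
  assumes "q \<noteq> 0" and "norm q \<noteq> 1"
    and "a2 \<noteq> 0" and "b2 \<noteq> 0"
    and "inj (hh q a1 a2)"
    and "inj (xx q b0 b1 b2)"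
    and "k \<ge> 1"
  shows "ff q a1 a2 b0 b1 b2 s1 s2 k
           = hadamard (ff q a1 a2 b0 b1 b2 s1 s2 0) (psi q (q * b1 / b2) k)"
proof (rule fps_ext)
  fix j
  obtain k' where k: "k = Suc k'" using assms(7) by (cases k) auto
  show "fps_nth (ff q a1 a2 b0 b1 b2 s1 s2 k) j
        = fps_nth (hadamard (ff q a1 a2 b0 b1 b2 s1 s2 0) (psi q (q * b1 / b2) k)) j"
  proof (cases "k \<le> j")
    case False then show ?thesis unfolding ff_def hadamard_def psi_def by simp
  next
    case True
    then obtain n where j: "j = Suc k' + n" using k le_Suc_ex by blast
    have I: "Cf q (q*b1/b2) (Suc k') (Suc k' + n) = vder q b0 b1 b2 (Suc k' + n) 0 / vder q b0 b1 b2 (Suc k' + n) (Suc k')"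
      by (rule ind[OF assms(1,2,4,6)])
    have ne: "vder q b0 b1 b2 j 0 \<noteq> 0" by (rule vder_ne[OF assms(1,2,4,6)])
    have "fps_nth (hadamard (ff q a1 a2 b0 b1 b2 s1 s2 0) (psi q (q * b1 / b2) k)) j
       = rho q a1 a2 b0 b1 b2 s1 s2 0 j * Cf q (q*b1/b2) k j"
      unfolding ff_def hadamard_def psi_def Cf_def using True by simp
    also have "\<dots> = rho q a1 a2 b0 b1 b2 s1 s2 k j"
      unfolding rho_def using I ne k j by simp
    finally show ?thesis unfolding ff_def using True by simp
  qed
qed

end
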